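(* Let $(A,\cdot)$ be a nearly associative algebra over a field $\mathbb{K}$ of characteristic $0$, let $V$ be a linear space and let $l,r:A\to\mathrm{End}(V)$ be linear maps such that $(l,r,V)$ is a bimodule of $(A,\cdot)$. Then the bracket on $A\oplus V$ given by $[x+u,y+v]=(x\cdot y-y\cdot x)+(l(x)-r(x))v-(l(y)-r(y))u$ for $x,y\in A$, $u,v\in V$, is a Lie algebra product on $A\oplus V$.
   Context: An algebra $(A,\cdot)$ is nearly associative if $x\cdot(y\cdot z)=(z\cdot x)\cdot y$ for all $x,y,z\in A$. A triple $(l,r,V)$, with $V$ a linear space and $l,r:A\to\mathrm{End}(V)$ linear, is a bimodule of $(A,\cdot)$ if for all $x,y\in A$: $l(x)l(y)=r(y)r(x)$, $l(x)r(y)=l(y\cdot x)$, and $r(x)l(y)=r(x\cdot y)$. *)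

theory Defs
  imports Complex_Main "HOL-Library.Product_Plus"
begin

definition algebra_over :: "('k::field \<Rightarrow> 'a::ab_group_add \<Rightarrow> 'a) \<Rightarrow> ('a \<Rightarrow> 'a \<Rightarrow> 'a) \<Rightarrow> bool" where
  "algebra_over sA m \<longleftrightarrow> vector_space sA
     \<and> (\<forall>x. Vector_Spaces.linear sA sA (m x))
     \<and> (\<forall>y. Vector_Spaces.linear sA sA (\<lambda>x. m x y))"

definition nearly_associative :: "('a \<Rightarrow> 'a \<Rightarrow> 'a) \<Rightarrow> bool" where
  "nearly_associative m \<longleftrightarrow> (\<forall>x y z. m x (m y z) = m (m z x) y)"

definition linear_to_End :: "('k::field \<Rightarrow> 'a::ab_group_add \<Rightarrow> 'a) \<Rightarrow> ('k \<Rightarrow> 'v::ab_group_add \<Rightarrow> 'v)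
    \<Rightarrow> ('a \<Rightarrow> 'v \<Rightarrow> 'v) \<Rightarrow> bool" where
  "linear_to_End sA sV l \<longleftrightarrow> (\<forall>x. Vector_Spaces.linear sV sV (l x))
     \<and> (\<forall>x y. l (x + y) = (\<lambda>v. l x v + l y v))
     \<and> (\<forall>c x. l (sA c x) = (\<lambda>v. sV c (l x v)))"

definition is_bimodule :: "('a \<Rightarrow> 'a \<Rightarrow> 'a) \<Rightarrow> ('a \<Rightarrow> 'v \<Rightarrow> 'v) \<Rightarrow> ('a \<Rightarrow> 'v \<Rightarrow> 'v) \<Rightarrow> bool" where
  "is_bimodule m l r \<longleftrightarrow>
     (\<forall>x y. l x \<circ> l y = r y \<circ> r x)
   \<and> (\<forall>x y. l x \<circ> r y = l (m y x))
   \<and> (\<forall>x y. r x \<circ> l y = r (m x y))"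

definition dsum_scale :: "('k \<Rightarrow> 'a \<Rightarrow> 'a) \<Rightarrow> ('k \<Rightarrow> 'v \<Rightarrow> 'v) \<Rightarrow> 'k \<Rightarrow> 'a \<times> 'v \<Rightarrow> 'a \<times> 'v" where
  "dsum_scale sA sV c p = (sA c (fst p), sV c (snd p))"

definition dsum_bracket :: "('a::ab_group_add \<Rightarrow> 'a \<Rightarrow> 'a) \<Rightarrow> ('a \<Rightarrow> 'v::ab_group_add \<Rightarrow> 'v) \<Rightarrow> ('a \<Rightarrow> 'v \<Rightarrow> 'v)
    \<Rightarrow> 'a \<times> 'v \<Rightarrow> 'a \<times> 'v \<Rightarrow> 'a \<times> 'v" where
  "dsum_bracket m l r p q =
     (m (fst p) (fst q) - m (fst q) (fst p),
      (l (fst p) (snd q) - r (fst p) (snd q)) - (l (fst q) (snd p) - r (fst q) (snd p)))"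

definition lie_algebra :: "('k::field \<Rightarrow> 'g::ab_group_add \<Rightarrow> 'g) \<Rightarrow> ('g \<Rightarrow> 'g \<Rightarrow> 'g) \<Rightarrow> bool" where
  "lie_algebra s b \<longleftrightarrow> vector_space s
     \<and> (\<forall>x. Vector_Spaces.linear s s (b x))
     \<and> (\<forall>y. Vector_Spaces.linear s s (\<lambda>x. b x y))
     \<and> (\<forall>x. b x x = 0)
     \<and> (\<forall>x y z. b x (b y z) + b y (b z x) + b z (b x y) = 0)"

end

theory Submission
  imports Defs
begin

lemma add_diff_hom:
  fixes f :: "'a::ab_group_add \<Rightarrow> 'b::ab_group_add"
  assumes "\<And>x y. f (x + y) = f x + f y"
  shows "f (x - y) = f x - f y"
proof -
  have "f (x - y) + f y = f x" using assms[of "x - y" y] by simp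
  then show ?thesis by (simp add: eq_diff_eq)
qed

theorem mainTheorem4:
  fixes sA :: "'k::field_char_0 \<Rightarrow> 'a::ab_group_add \<Rightarrow> 'a"
    and sV :: "'k \<Rightarrow> 'v::ab_group_add \<Rightarrow> 'v"
    and m :: "'a \<Rightarrow> 'a \<Rightarrow> 'a"
    and l r :: "'a \<Rightarrow> 'v \<Rightarrow> 'v"
  assumes "algebra_over sA m"
    and "nearly_associative m"
    and "vector_space sV"
    and "linear_to_End sA sV l"
    and "linear_to_End sA sV r"
    and "is_bimodule m l r"
  shows "lie_algebra (dsum_scale sA sV) (dsum_bracket m l r)"
proof -
  have vA: "vector_space sA" using assms(1) unfolding algebra_over_def by blast
  have vV: "vector_space sV" by fact
  have m1: "\<And>x y z. m x (y + z) = m x y + m x z" and m1s: "\<And>x c y. m x (sA c y) = sA c (m x y)"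
    using assms(1) unfolding algebra_over_def Vector_Spaces.linear_iff by auto
  have m2: "\<And>x y z. m (y + z) x = m y x + m z x" and m2s: "\<And>x c y. m (sA c y) x = sA c (m y x)"
    using assms(1) unfolding algebra_over_def Vector_Spaces.linear_iff by auto
  have m1d: "\<And>x y z. m x (y - z) = m x y - m x z" by (rule add_diff_hom) (rule m1)
  have m2d: "\<And>x y z. m (y - z) x = m y x - m z x" by (rule add_diff_hom[where f="\<lambda>y. m y x" for x]) (rule m2)
  have na: "\<And>x y z. m x (m y z) = m (m z x) y" using assms(2) unfolding nearly_associative_def by blast
  have l1: "\<And>x u v. l x (u + v) = l x u + l x v" and l1s: "\<And>x c u. l x (sV c u) = sV c (l x u)"
    and l2: "\<And>x y v. l (x + y) v = l x v + l y v" and l2s: "\<And>c x v. l (sA c x) v = sV c (l x v)"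
    using assms(4) unfolding linear_to_End_def Vector_Spaces.linear_iff by (metis)+
  have r1: "\<And>x u v. r x (u + v) = r x u + r x v" and r1s: "\<And>x c u. r x (sV c u) = sV c (r x u)"
    and r2: "\<And>x y v. r (x + y) v = r x v + r y v" and r2s: "\<And>c x v. r (sA c x) v = sV c (r x v)"
    using assms(5) unfolding linear_to_End_def Vector_Spaces.linear_iff by (metis)+
  have l1d: "\<And>x u v. l x (u - v) = l x u - l x v" by (rule add_diff_hom) (rule l1)
  have r1d: "\<And>x u v. r x (u - v) = r x u - r x v" by (rule add_diff_hom) (rule r1)
  have l2d: "\<And>x y v. l (x - y) v = l x v - l y v" by (rule add_diff_hom[where f="\<lambda>x. l x v" for v]) (rule l2)
  have r2d: "\<And>x y v. r (x - y) v = r x v - r y v" by (rule add_diff_hom[where f="\<lambda>x. r x v" for v]) (rule r2)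
  have b1: "\<And>x y v. l x (l y v) = r y (r x v)" and b2: "\<And>x y v. l x (r y v) = l (m y x) v"
    and b3: "\<And>x y v. r x (l y v) = r (m x y) v"
    using assms(6) unfolding is_bimodule_def by (metis comp_apply)+
  have sAd: "\<And>c a b. sA c (a - b) = sA c a - sA c b" by (rule add_diff_hom) (rule vector_space.vector_space_assms(1)[OF vA])
  have sVd: "\<And>c a b. sV c (a - b) = sV c a - sV c b" by (rule add_diff_hom) (rule vector_space.vector_space_assms(1)[OF vV])
  have vS: "vector_space (dsum_scale sA sV)"
    unfolding vector_space_def dsum_scale_def
    using vA vV unfolding vector_space_def
    by (auto simp: plus_prod_def)
  have sAa: "\<And>c a b. sA c (a + b) = sA c a + sA c b" by (rule vector_space.vector_space_assms(1)[OF vA])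
  have sVa: "\<And>c a b. sV c (a + b) = sV c a + sV c b" by (rule vector_space.vector_space_assms(1)[OF vV])
  note simps = sAa sVa dsum_bracket_def dsum_scale_def plus_prod_def m1 m2 m1d m2d m1s m2s l1 l2 l1s l2s r1 r2 r1s r2s
    l1d l2d r1d r2d sAd sVd
  have lin1: "\<And>x. Vector_Spaces.linear (dsum_scale sA sV) (dsum_scale sA sV) (dsum_bracket m l r x)"
    unfolding Vector_Spaces.linear_iff using vS by (auto simp: simps algebra_simps)
  have lin2: "\<And>y. Vector_Spaces.linear (dsum_scale sA sV) (dsum_scale sA sV) (\<lambda>x. dsum_bracket m l r x y)"
    unfolding Vector_Spaces.linear_iff using vS by (auto simp: simps algebra_simps)
  have jac: "\<And>x y z. dsum_bracket m l r x (dsum_bracket m l r y z) + dsum_bracket m l r y (dsum_bracket m l r z x)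
      + dsum_bracket m l r z (dsum_bracket m l r x y) = 0"
    by (auto simp: dsum_bracket_def m1d m2d l1d l2d r1d r2d l1 r1 na b1 b2 b3 algebra_simps zero_prod_def)
  show ?thesis unfolding lie_algebra_def using vS lin1 lin2 jac
    by (auto simp: dsum_bracket_def zero_prod_def)
qed

end
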